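(* Assume the setting, Assumptions (A1)–(A9) and notation described in the context. Let $\delta\in(0,1)$, let $\alpha\in\left(\tfrac12,\tfrac{p+1}{2p}\right)$, set $\epsilon_n=n^{-\alpha}$, and let $\gamma:=\max\{p(\alpha-\tfrac12)-\tfrac12,\ \tfrac12-\alpha\}$ (so $\gamma<0$). Then there exist $C\in\mathbb{R}$ and $N\in\mathbb{N}$ such that \[ \left|\frac{\Pr\{\mathbf{s}_n\in\mathcal{N}_{\epsilon_n}(\mathbf{s}_n^* )\mid \boldsymbol{\theta},\mathbf{y}_{\mathbf{a}n}\}}{(2\epsilon_n\sqrt n)^p}-\phi\!\left[\sqrt n\{\mathbf{s}_n^*-\mathbf{r}_n(\boldsymbol{\theta})\};\ \mathbf{0},\ \mathbf{V}_n(\boldsymbol{\theta})\right]\right|\le C n^{\gamma} \] with probability at least $1-\delta$ for all $n\ge N$ and all $\boldsymbol{\theta}\in\mathcal{T}$. Moreover, this bound is optimized by the choice $\alpha=\frac{2+p}{2(p+1)}$, which gives $\gamma=-\frac{1}{2(p+1)}$.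
   Context: Setting. For each $n$, there are $n$ units with binary treatments $a_i\in\{0,1\}$ and real potential outcomes $y_{0i},y_{1i}$. We consider a triangular array whose $n$-th row is $(\mathbf{a}_n,\mathbf{y}_{\mathbf{a}n})$, where $\mathbf{a}_n\in\{0,1\}^n$ is the treatment assignment vector and $\mathbf{y}_{\mathbf{a}n}$ is the vector of observed potential outcomes (its $i$-th entry is $y_{a_i i}$). No parametric distributional assumption is made on $\mathbf{y}_{\mathbf{a}n}$. (A1) Consistency: the observed outcomes equal $\mathbf{y}_{\mathbf{a}n}$. (A2) Unconfoundedness: $\mathbf{a}_n$ is independent of all potential outcomes. (A3) Known assignment mechanism: $\mathbf{a}_n\sim \mathrm{P}_n$ with $\mathrm{P}_n$ known. The analysis conditions on (fixes) $\mathbf{y}_{\mathbf{a}n}$ and treats the assignment as random with law $\mathrm{P}_n$ independent of $\mathbf{y}_{\mathbf{a}n}$. A treatment effect model $\mathcal{M}_{\boldsymbol{\theta}}$, indexed by $\boldsymbol{\theta}\in\mathcal{T}\subset\mathbb{R}^p$, specifies for each unit independently a (deterministic or stochastic) imputation of the unobserved potential outcome(s) given the observed one, so that for any assignment vector $\tilde{\mathbf{a}}$ it determines (possibly random) potential outcomes $\mathbf{y}_{\tilde{\mathbf{a}}}$ from $\mathbf{y}_{\mathbf{a}n}$ and $\boldsymbol{\theta}$. A statistic $\mathbf{s}_n=\mathbf{f}_n(\mathbf{y}_{\mathbf{a}n},\mathbf{a}_n)\in\mathbb{R}^p$ (same dimension $p$ as $\boldsymbol{\theta}$) is given for a known function $\mathbf{f}_n$;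 $\mathbf{s}_n^*$ denotes its observed value. Its model-based randomization distribution is $\Pr\{\mathbf{s}_n\le \mathbf{s}\mid\boldsymbol{\theta},\mathbf{y}_{\mathbf{a}n}\}:=\Pr\{\mathbf{f}_n(\mathbf{y}_{\tilde{\mathbf{a}}},\tilde{\mathbf{a}})\le\mathbf{s}\mid \boldsymbol{\theta},\mathbf{y}_{\mathbf{a}n}\}$ (componentwise inequality), where $\tilde{\mathbf{a}}\sim\mathrm{P}_n$ is a fresh draw and $\mathbf{y}_{\tilde{\mathbf{a}}}$ is the model-based imputation (randomness from $\tilde{\mathbf a}$ and any stochastic imputation). Expectations, variances and probabilities "given $\boldsymbol{\theta},\mathbf{y}_{\mathbf{a}n}$" refer to this distribution. For $\epsilon>0$, $\mathcal{N}_{\epsilon}(\mathbf{s}^* ):=\{\mathbf{s}\in\mathbb{R}^p:\|\mathbf{s}-\mathbf{s}^*\|_\infty\le\epsilon\}$. $\phi(\cdot;\boldsymbol{\mu},\boldsymbol{\Sigma})$ and $\Phi(\cdot;\boldsymbol{\mu},\boldsymbol{\Sigma})$ are the multivariate Gaussian density and CDF. A prior density $p(\boldsymbol{\theta}\mid\mathbf{y}_{\mathbf{a}n})$ on $\mathcal T$ is given. Convergence in probability ($\overset{p}{\to}$) refers to the randomness of the triangular array. (A4) $\mathbf{r}_n(\boldsymbol{\theta}):=\mathbb{E}(\mathbf{s}_n\mid\boldsymbol{\theta},\mathbf{y}_{\mathbf{a}n})$ and $\mathbf{V}_n(\boldsymbol{\theta}):=n\,\mathrm{Var}(\mathbf{s}_n\mid\boldsymbol{\theta},\mathbf{y}_{\mathbf{a}n})$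 exist for all $n$ and $\boldsymbol{\theta}\in\mathcal T$. (A5) $\mathcal T=\mathrm{supp}(\boldsymbol\theta)\subset\mathbb{R}^p$ is compact. (A6) There is $\mathbf{r}:\mathcal T\to\mathbb{R}^p$ with: (a) $\sqrt n\sup_{\boldsymbol\theta\in\mathcal T}\|\mathbf r_n(\boldsymbol\theta)-\mathbf r(\boldsymbol\theta)\|_\infty\overset{p}{\to}0$; (b) a unique $\boldsymbol\theta^*\in\mathcal T$ with $\mathbf s_n\overset{p}{\to}\mathbf r(\boldsymbol\theta^* )$; (c) $\mathbf r$ twice differentiable on an open neighborhood of $\boldsymbol\theta^*$; (d) the Jacobian $\mathbf r'(\boldsymbol\theta^* )$ is invertible; (e) $\{\mathbf r'(\boldsymbol\theta^* )\}^{-1}\mathbf V(\boldsymbol\theta^* )\{\mathbf r'(\boldsymbol\theta^* )\}^{-\top}$ is positive definite (with $\mathbf V$ from (A7)). (A7) There is $\mathbf V:\mathcal T\to\mathbb R^{p\times p}$ with: (a) $\sup_{\boldsymbol\theta\in\mathcal T}\|\mathbf V_n(\boldsymbol\theta)-\mathbf V(\boldsymbol\theta)\|_{\infty,\infty}\overset{p}{\to}0$; (b) $\mathbf V_{\min}\preceq\mathbf V(\boldsymbol\theta)\preceq\mathbf V_{\max}$ for all $\boldsymbol\theta\in\mathcal T$, for two positive definite matrices $\mathbf V_{\min},\mathbf V_{\max}$; (c) $\mathbf V$ is continuous on an open neighborhood of $\boldsymbol\theta^*$. (A8) (a) There is $C>0$ with $1\{\sup_{\boldsymbol\theta\in\mathcal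 T}p(\boldsymbol\theta\mid\mathbf y_{\mathbf an})\le C\}\overset{p}{\to}1$; (b) there is $C>0$ with $p(\boldsymbol\theta^*\mid\mathbf y_{\mathbf an})\overset{p}{\to}C$; (c) for every $\epsilon>0$ there is $\delta>0$ with $1\{\sup_{\|\boldsymbol\theta-\boldsymbol\theta^*\|_\infty<\delta}|p(\boldsymbol\theta\mid\mathbf y_{\mathbf an})-p(\boldsymbol\theta^*\mid\mathbf y_{\mathbf an})|<\epsilon\}\overset{p}{\to}1$. (A9) Let $\mathbf z_n(\boldsymbol\theta):=\sqrt n\{\mathbf s_n-\mathbf r_n(\boldsymbol\theta)\}$. For every $\delta\in(0,1)$ there exist $C\in\mathbb R$ and $N\in\mathbb N$ such that, with probability at least $1-\delta$, for all $n\ge N$ and $\mathbf z\in\mathbb R^p$: $\sup_{\boldsymbol\theta\in\mathcal T}|\Pr\{\mathbf z_n(\boldsymbol\theta)\le\mathbf z\mid\boldsymbol\theta,\mathbf y_{\mathbf an}\}-\Phi\{\mathbf z;\mathbf 0,\mathbf V_n(\boldsymbol\theta)\}|\le C/\sqrt n$ (the probability inside being the model-based randomization distribution). *)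

theory Defs
  imports "HOL-Analysis.Analysis" "HOL-Probability.Probability"
begin

text \<open>Dimension p is CARD('p); vectors in R^p are real^'p; the order on real^'p
  (library instance) is componentwise.\<close>

definition supnorm :: "real^'p::finite \<Rightarrow> real" where
  "supnorm x = Max (range (\<lambda>i. \<bar>x $ i\<bar>))"

text \<open>Matrix norm induced by the sup-norm (maximum absolute row sum).\<close>
definition matnorm_inf :: "real^'p::finite^'q::finite \<Rightarrow> real" where
  "matnorm_inf A = Max (range (\<lambda>i. \<Sum>j\<in>UNIV. \<bar>A $ i $ j\<bar>))"

definition supball :: "real^'p::finite \<Rightarrow> real \<Rightarrow> (real^'p) set" where
  "supball s e = {x. supnorm (x - s) \<le> e}"

definition pos_def :: "real^'p::finite^'p \<Rightarrow> bool" where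
  "pos_def A \<longleftrightarrow> transpose A = A \<and> (\<forall>x. x \<noteq> 0 \<longrightarrow> x \<bullet> (A *v x) > 0)"

definition loewner_le :: "real^'p::finite^'p \<Rightarrow> real^'p^'p \<Rightarrow> bool" where
  "loewner_le A B \<longleftrightarrow> (\<forall>x. x \<bullet> (A *v x) \<le> x \<bullet> (B *v x))"

definition gauss_pdf :: "real^'p::finite^'p \<Rightarrow> real^'p \<Rightarrow> real" where
  "gauss_pdf V z = exp (- (z \<bullet> (matrix_inv V *v z)) / 2) / sqrt ((2 * pi) ^ CARD('p) * det V)"

definition gauss_cdf :: "real^'p::finite^'p \<Rightarrow> real^'p \<Rightarrow> real" where
  "gauss_cdf V z = (LINT x : {x. x \<le> z} | lborel. gauss_pdf V x)"

text \<open>Q is the (model-based randomization) law of s_n given theta and the data.\<close>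
definition rmean :: "(real^'p::finite) measure \<Rightarrow> real^'p" where
  "rmean Q = (\<chi> i. \<integral>x. x $ i \<partial>Q)"

definition rcov_scaled :: "nat \<Rightarrow> (real^'p::finite) measure \<Rightarrow> real^'p^'p" where
  "rcov_scaled n Q = (\<chi> i j. real n * ((\<integral>x. x $ i * x $ j \<partial>Q) - rmean Q $ i * rmean Q $ j))"

text \<open>"P holds with probability at least 1 - d" (inner probability: P holds on an
  event of probability at least 1 - d).\<close>
definition wp_at_least :: "'w measure \<Rightarrow> ('w \<Rightarrow> bool) \<Rightarrow> real \<Rightarrow> bool" where
  "wp_at_least M P d \<longleftrightarrow> (\<exists>A\<in>sets M. measure M A \<ge> 1 - d \<and> (\<forall>w\<in>A. P w))"

definition event_to_one :: "'w measure \<Rightarrow> (nat \<Rightarrow> 'w \<Rightarrow> bool) \<Rightarrow> bool" where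
  "event_to_one M E \<longleftrightarrow> (\<forall>d>0. eventually (\<lambda>n. wp_at_least M (E n) d) sequentially)"

definition conv_prob_vec :: "'w measure \<Rightarrow> (nat \<Rightarrow> 'w \<Rightarrow> real^'p::finite) \<Rightarrow> real^'p \<Rightarrow> bool" where
  "conv_prob_vec M X c \<longleftrightarrow> (\<forall>e>0. event_to_one M (\<lambda>n w. supnorm (X n w - c) \<le> e))"

definition conv_prob_real :: "'w measure \<Rightarrow> (nat \<Rightarrow> 'w \<Rightarrow> real) \<Rightarrow> real \<Rightarrow> bool" where
  "conv_prob_real M X c \<longleftrightarrow> (\<forall>e>0. event_to_one M (\<lambda>n w. \<bar>X n w - c\<bar> \<le> e))"

definition gamma_rate :: "nat \<Rightarrow> real \<Rightarrow> real" where
  "gamma_rate p a = max (real p * (a - 1/2) - 1/2) (1/2 - a)"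

end

theory Submission
  imports Defs
begin

definition Eset :: "real^'p::finite \<Rightarrow> real^'p \<Rightarrow> 'p set \<Rightarrow> (real^'p) set" where
  "Eset a b I = {x. (\<forall>i. x$i \<le> b$i) \<and> (\<forall>i\<in>I. a$i < x$i)}"

lemma Eset_sets: fixes a :: "real^'p::finite" shows "Eset a b I \<in> sets borel"
proof -
  have "Eset a b I = (\<Inter>i. {x::real^'p. x$i \<le> b$i}) \<inter> (\<Inter>i\<in>I. {x. a$i < x$i})"
    by (auto simp: Eset_def)
  moreover have "(\<Inter>i. {x::real^'p. x$i \<le> b$i}) \<in> sets borel"
    by (intro sets.countable_INT) (auto intro!: borel_closed closed_Collect_le continuous_intros)
  moreover have "(\<Inter>i\<in>I. {x::real^'p. a$i < x$i}) \<in> sets borel"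
  proof (cases "I = {}")
    case True then show ?thesis by simp
  next
    case False then show ?thesis
    by (intro sets.countable_INT') (auto intro!: borel_open open_Collect_less continuous_intros)
  qed
  ultimately show ?thesis by simp
qed

lemma Eset_empty: "Eset a b {} = {x. x \<le> b}"
  by (auto simp: Eset_def less_eq_vec_def)

lemma Eset_insert:
  "Eset a b (insert j I) = Eset a b I - Eset a (\<chi> i. if i = j then min (a$j) (b$j) else b$i) I"
  "Eset a (\<chi> i. if i = j then min (a$j) (b$j) else b$i) I \<subseteq> Eset a b I"
  by (auto simp: Eset_def not_less)

lemma Eset_UNIV: "Eset a b UNIV = {x. (\<forall>i. a$i < x$i \<and> x$i \<le> b$i)}"
  by (auto simp: Eset_def)

lemma IE_bound:
  fixes \<mu> \<nu> :: "(real^'p::finite) measure"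
  assumes sm: "sets \<mu> = sets borel" and sn: "sets \<nu> = sets borel"
    and fm: "\<And>z. emeasure \<mu> {x. x \<le> z} < \<infinity>"
    and fn: "\<And>z. emeasure \<nu> {x. x \<le> z} < \<infinity>"
    and close: "\<And>z. \<bar>measure \<mu> {x. x \<le> z} - measure \<nu> {x. x \<le> z}\<bar> \<le> e"
    and I: "finite I"
  shows "\<bar>measure \<mu> (Eset a b I) - measure \<nu> (Eset a b I)\<bar> \<le> 2 ^ card I * e"
  using I
proof (induction I arbitrary: b rule: finite_induct)
  case empty
  then show ?case using close by (simp add: Eset_empty)
next
  case (insert j I)
  define b' where "b' = (\<chi> i. if i = j then min (a$j) (b$j) else b$i)"
  have fin: "emeasure M (Eset a c I) < \<infinity>" if "M = \<mu> \<or> M = \<nu>" for M c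
  proof -
    have "Eset a c I \<subseteq> {x. x \<le> c}" by (auto simp: Eset_def less_eq_vec_def)
    then have "emeasure M (Eset a c I) \<le> emeasure M {x. x \<le> c}"
      using that sm sn Eset_empty Eset_sets[of a c "{}"]
      by (intro emeasure_mono) auto
    then show ?thesis using that fm fn by (meson le_less_trans)
  qed
  have eq: "measure M (Eset a b (insert j I)) = measure M (Eset a b I) - measure M (Eset a b' I)"
    if "M = \<mu> \<or> M = \<nu>" for M
  proof -
    have "emeasure M (Eset a b I) \<noteq> \<infinity>" using fin[OF that, of b] by simp
    moreover have "sets M = sets borel" using that sm sn by auto
    ultimately show ?thesis unfolding b'_def Eset_insert(1)
      by (intro measure_Diff) (auto simp: Eset_sets Eset_insert(2))
  qed
  have "\<bar>measure \<mu> (Eset a b (insert j I)) - measure \<nu> (Eset a b (insert j I))\<bar>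
      \<le> \<bar>measure \<mu> (Eset a b I) - measure \<nu> (Eset a b I)\<bar> + \<bar>measure \<mu> (Eset a b' I) - measure \<nu> (Eset a b' I)\<bar>"
    using eq[of \<mu>] eq[of \<nu>] by simp
  also have "\<dots> \<le> 2 ^ card I * e + 2 ^ card I * e"
    using insert.IH[of b] insert.IH[of b'] by (rule add_mono)
  also have "\<dots> = 2 ^ card (insert j I) * e" using insert by simp
  finally show ?case .
qed

definition symm :: "real^'p::finite^'p \<Rightarrow> bool" where
  "symm M \<longleftrightarrow> (\<forall>i j. M$i$j = M$j$i)"

lemma symm_inner:
  fixes M :: "real^'p::finite^'p"
  assumes "symm M"
  shows "u \<bullet> (M *v w) = w \<bullet> (M *v u)"
proof -
  have "u \<bullet> (M *v w) = (\<Sum>i\<in>UNIV. \<Sum>j\<in>UNIV. u$i * M$i$j * w$j)"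
    by (simp add: inner_vec_def matrix_vector_mult_def sum_distrib_left mult.assoc)
  also have "\<dots> = (\<Sum>j\<in>UNIV. \<Sum>i\<in>UNIV. u$i * M$i$j * w$j)"
    by (rule sum.swap)
  also have "\<dots> = w \<bullet> (M *v u)"
    using assms by (simp add: symm_def inner_vec_def matrix_vector_mult_def sum_distrib_left mult.assoc mult.left_commute mult.commute)
  finally show ?thesis .
qed

lemma symm_transpose: "symm M \<longleftrightarrow> transpose M = M"
  by (auto simp: symm_def transpose_def vec_eq_iff)

lemma inv_facts:
  fixes V :: "real^'p::finite^'p"
  assumes sym: "symm V" and pd: "\<And>y. m * (norm y)^2 \<le> y \<bullet> (V *v y)" and m: "m > 0"
  shows "V ** matrix_inv V = mat 1" "matrix_inv V ** V = mat 1"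
    "V *v (matrix_inv V *v z) = z" "symm (matrix_inv V)"
proof -
  have ker: "\<forall>x. V *v x = 0 \<longrightarrow> x = 0"
  proof (intro allI impI)
    fix x assume "V *v x = 0"
    then have "m * (norm x)^2 \<le> 0" using pd[of x] by simp
    then show "x = 0" using m by (simp add: mult_le_0_iff)
  qed
  then obtain B where B: "B ** V = mat 1" using matrix_left_invertible_ker by blast
  then have B2: "V ** B = mat 1" using matrix_left_right_inverse by blast
  have ex: "\<exists>A'. V ** A' = mat 1 \<and> A' ** V = mat 1" using B B2 by blast
  then have AA: "V ** matrix_inv V = mat 1 \<and> matrix_inv V ** V = mat 1"
    unfolding matrix_inv_def by (rule someI_ex)
  then show "V ** matrix_inv V = mat 1" "matrix_inv V ** V = mat 1" by auto
  show "V *v (matrix_inv V *v z) = z"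
    using AA by (simp add: matrix_vector_mul_assoc)
  have tV: "transpose V = V" using sym symm_transpose by blast
  have "transpose (matrix_inv V) ** V = mat 1"
    using AA tV by (metis matrix_transpose_mul transpose_mat)
  then have "transpose (matrix_inv V) = transpose (matrix_inv V) ** (V ** matrix_inv V)"
    using AA by simp
  also have "\<dots> = matrix_inv V"
    by (simp add: matrix_mul_assoc \<open>transpose (matrix_inv V) ** V = mat 1\<close>)
  finally show "symm (matrix_inv V)" using symm_transpose by blast
qed

lemma quad_facts:
  fixes V :: "real^'p::finite^'p"
  assumes sym: "symm V" and pd: "\<And>y. m * (norm y)^2 \<le> y \<bullet> (V *v y)" and m: "m > 0"
  shows "z \<bullet> (matrix_inv V *v z) = (matrix_inv V *v z) \<bullet> (V *v (matrix_inv V *v z))"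
    "m * (norm (matrix_inv V *v z))^2 \<le> z \<bullet> (matrix_inv V *v z)"
    "m * norm (matrix_inv V *v z) \<le> norm z"
    "z \<bullet> (matrix_inv V *v z) \<le> (norm z)^2 / m"
proof -
  define y where "y = matrix_inv V *v z"
  have z: "V *v y = z" using inv_facts(3)[OF sym pd m] y_def by simp
  show e1: "z \<bullet> (matrix_inv V *v z) = (matrix_inv V *v z) \<bullet> (V *v (matrix_inv V *v z))"
    using z y_def by (simp add: inner_commute)
  show e2: "m * (norm (matrix_inv V *v z))^2 \<le> z \<bullet> (matrix_inv V *v z)"
    using e1 pd by simp
  have "z \<bullet> y \<le> norm z * norm y" by (rule norm_cauchy_schwarz)
  then have a: "m * (norm y)^2 \<le> norm z * norm y" using e2 y_def by simp
  show e3: "m * norm (matrix_inv V *v z) \<le> norm z"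
  proof (cases "norm y = 0")
    case True then show ?thesis using y_def by simp
  next
    case False
    then have "norm y > 0" by simp
    with a show ?thesis unfolding y_def[symmetric]
      by (simp add: power2_eq_square)
  qed
  have "z \<bullet> y \<le> norm z * norm y" by (rule norm_cauchy_schwarz)
  also have "\<dots> \<le> norm z * (norm z / m)"
    using e3 m y_def by (intro mult_left_mono) (auto simp: field_simps)
  finally show "z \<bullet> (matrix_inv V *v z) \<le> (norm z)^2 / m"
    using y_def by (simp add: power2_eq_square)
qed

lemma r_exp_bound:
  fixes r m :: real
  assumes "r \<ge> 0" "m > 0"
  shows "r * exp (- (m * r^2) / 2) \<le> 1 / sqrt m"
proof -
  define s where "s = sqrt m * r"
  have s0: "s \<ge> 0" using assms s_def by simp
  have "s \<le> 1 + s^2/2"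
  proof -
    have "0 \<le> (s - 1)^2 + 1" by simp
    then show ?thesis by (simp add: power2_eq_square algebra_simps)
  qed
  also have "\<dots> \<le> exp (s^2/2)" by (rule exp_ge_add_one_self)
  finally have "s \<le> exp (s^2/2)" .
  then have "s * exp (- (s^2/2)) \<le> 1"
    by (simp add: exp_minus field_simps)
  moreover have "s^2 = m * r^2" using assms s_def by (simp add: power_mult_distrib)
  ultimately have "sqrt m * (r * exp (- (m * r^2) / 2)) \<le> 1"
    using s_def by (simp add: mult.assoc)
  then show ?thesis using assms by (simp add: field_simps)
qed

lemma gauss_pdf_lip:
  fixes V :: "real^'p::finite^'p"
  assumes sym: "symm V" and pd: "\<And>y. m * (norm y)^2 \<le> y \<bullet> (V *v y)" and m: "m > 0"
  shows "\<bar>gauss_pdf V z1 - gauss_pdf V z2\<bar>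
     \<le> \<bar>1 / sqrt ((2 * pi) ^ CARD('p) * det V)\<bar> * norm (z1 - z2) / sqrt m"
proof -
  define A where "A = matrix_inv V"
  define S where "S = sqrt ((2 * pi) ^ CARD('p) * det V)"
  define d where "d = z1 - z2"
  have symA: "symm A" using inv_facts(4)[OF sym pd m] A_def by simp
  define Q where "Q t = (z2 + t *\<^sub>R d) \<bullet> (A *v (z2 + t *\<^sub>R d))" for t
  have Qe: "Q t = z2 \<bullet> (A *v z2) + t * (2 * (d \<bullet> (A *v z2))) + t^2 * (d \<bullet> (A *v d))" for t
    using symm_inner[OF symA, of z2 d]
    by (simp add: Q_def algebra_simps inner_add_left inner_add_right power2_eq_square)
  define g where "g t = exp (- Q t / 2)" for t
  define g' where "g' t = - exp (- Q t / 2) * (d \<bullet> (A *v (z2 + t *\<^sub>R d)))" for t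
  have der: "DERIV g t :> g' t" for t
  proof -
    have "DERIV (\<lambda>t. - (z2 \<bullet> (A *v z2) + t * (2 * (d \<bullet> (A *v z2))) + t^2 * (d \<bullet> (A *v d))) / 2) t
          :> - (2 * (d \<bullet> (A *v z2)) + 2 * t * (d \<bullet> (A *v d))) / 2"
      by (auto intro!: derivative_eq_intros)
    then have "DERIV (\<lambda>t. exp (- Q t / 2)) t :> exp (- Q t / 2) * (- (2 * (d \<bullet> (A *v z2)) + 2 * t * (d \<bullet> (A *v d))) / 2)"
      unfolding Qe by (rule DERIV_chain2[OF DERIV_exp])
    moreover have "exp (- Q t / 2) * (- (2 * (d \<bullet> (A *v z2)) + 2 * t * (d \<bullet> (A *v d))) / 2) = g' t"
      unfolding g'_def by (simp add: inner_add_right field_simps matrix_vector_right_distrib matrix_vector_mult_scaleR)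
    ultimately show ?thesis unfolding g_def by simp
  qed
  have bnd: "\<bar>g' t\<bar> \<le> norm d / sqrt m" for t
  proof -
    define w where "w = z2 + t *\<^sub>R d"
    have Qw: "Q t = w \<bullet> (A *v w)" using Q_def w_def by simp
    have q1: "m * (norm (A *v w))^2 \<le> Q t" using quad_facts(2)[OF sym pd m, of w] Qw A_def by simp
    have "\<bar>g' t\<bar> = exp (- Q t / 2) * \<bar>d \<bullet> (A *v w)\<bar>" by (simp add: g'_def w_def abs_mult)
    also have "\<dots> \<le> exp (- Q t / 2) * (norm d * norm (A *v w))"
      by (intro mult_left_mono) (auto simp: Cauchy_Schwarz_ineq2)
    also have "\<dots> \<le> exp (- (m * (norm (A *v w))^2) / 2) * (norm d * norm (A *v w))"
      using q1 by (intro mult_right_mono) auto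
    also have "\<dots> = norm d * (norm (A *v w) * exp (- (m * (norm (A *v w))^2) / 2))" by simp
    also have "\<dots> \<le> norm d * (1 / sqrt m)"
      by (intro mult_left_mono r_exp_bound) (use m in auto)
    finally show ?thesis by simp
  qed
  obtain t where t: "0 < t" "t < 1" "g 1 - g 0 = (1 - 0) * g' t"
    using MVT2[of 0 1 g g'] der by auto
  have "gauss_pdf V z1 - gauss_pdf V z2 = (g 1 - g 0) / S"
    by (simp add: gauss_pdf_def g_def Q_def d_def A_def S_def diff_divide_distrib)
  then have "\<bar>gauss_pdf V z1 - gauss_pdf V z2\<bar> = \<bar>1/S\<bar> * \<bar>g' t\<bar>" using t by (simp add: abs_mult)
  also have "\<dots> \<le> \<bar>1/S\<bar> * (norm d / sqrt m)" by (intro mult_left_mono bnd) auto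
  finally show ?thesis by (simp add: S_def d_def)
qed

lemma gauss_pdf_cont: "continuous_on UNIV (gauss_pdf (V::real^'p::finite^'p))"
proof -
  have "continuous_on UNIV (\<lambda>z::real^'p. matrix_inv V *v z)"
    by (intro linear_continuous_on matrix_vector_mul_bounded_linear)
  then show ?thesis unfolding gauss_pdf_def[abs_def] divide_inverse
    by (intro continuous_intros) auto
qed

lemma gauss_pdf_meas: "gauss_pdf (V::real^'p::finite^'p) \<in> borel_measurable borel"
  using gauss_pdf_cont borel_measurable_continuous_onI by blast

lemma lborel_Eset:
  fixes a b :: "real^'p::finite"
  assumes "\<And>i. a$i \<le> b$i"
  shows "emeasure lborel (Eset a b UNIV) = ennreal (\<Prod>i\<in>UNIV. b$i - a$i)"
proof -
  have ne: "cbox a b \<noteq> {}" using assms by (auto simp: interval_eq_empty_cart not_less)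
  have c: "emeasure lborel (cbox a b) = ennreal (\<Prod>i\<in>UNIV. b$i - a$i)"
    using emeasure_eq_ennreal_measure[of lborel "cbox a b"] emeasure_lborel_cbox_finite[of a b]
      content_cbox_cart[OF ne] by simp
  have bx: "emeasure lborel (box a b) = emeasure lborel (cbox a b)"
    by (simp add: emeasure_lborel_box_eq emeasure_lborel_cbox_eq)
  have s1: "box a b \<subseteq> Eset a b UNIV" by (auto simp: Eset_UNIV mem_box_cart) (meson less_imp_le)
  have s2: "Eset a b UNIV \<subseteq> cbox a b" by (auto simp: Eset_UNIV mem_box_cart less_imp_le)
  have "emeasure lborel (box a b) \<le> emeasure lborel (Eset a b UNIV)"
    using s1 Eset_sets[of a b UNIV] by (intro emeasure_mono) auto
  moreover have "emeasure lborel (Eset a b UNIV) \<le> emeasure lborel (cbox a b)"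
    using s2 by (intro emeasure_mono) auto
  ultimately show ?thesis using c bx by (metis antisym)
qed

lemma orth_sets: "{x::real^'p::finite. x \<le> z} \<in> sets borel"
  using Eset_sets[of z z "{}"] by (simp add: Eset_empty)

lemma exists_big:
  fixes P :: "(real^'p::finite) measure"
  assumes P: "prob_space P" and sP: "sets P = sets borel"
  shows "\<exists>z0. \<forall>z. z0 \<le> z \<longrightarrow> measure P {x. x \<le> z} > 1/2"
proof -
  interpret prob_space P by (rule P)
  define U where "U k = {x::real^'p. x \<le> real k *\<^sub>R 1}" for k :: nat
  have "range U \<subseteq> sets P" using sP orth_sets U_def by auto
  moreover have "incseq U"
    by (auto simp: incseq_def U_def less_eq_vec_def) (meson order_trans of_nat_mono)
  ultimately have lim: "(\<lambda>k. measure P (U k)) \<longlonglongrightarrow> measure P (\<Union>(range U))"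
    by (rule finite_Lim_measure_incseq)
  have "\<Union>(range U) = UNIV"
  proof safe
    fix x :: "real^'p"
    obtain k :: nat where k: "norm x \<le> real k" using real_arch_simple by blast
    have "x \<le> real k *\<^sub>R 1" unfolding less_eq_vec_def
      using k component_le_norm_cart[of x] by (auto intro: order_trans abs_ge_self)
    then show "x \<in> \<Union>(range U)" unfolding U_def by auto
  qed auto
  then have "measure P (\<Union>(range U)) = 1" using sP prob_space
    by (metis sets_eq_imp_space_eq space_borel)
  with lim have "eventually (\<lambda>k. measure P (U k) > 1/2) sequentially"
    by (intro order_tendstoD) auto
  then obtain k where k: "measure P (U k) > 1/2" by (meson eventually_sequentially order_refl)
  show ?thesis
  proof (intro exI allI impI)
    fix z :: "real^'p" assume "real k *\<^sub>R 1 \<le> z"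
    then have "U k \<subseteq> {x. x \<le> z}" unfolding U_def by auto
    then have "measure P (U k) \<le> measure P {x. x \<le> z}"
      using sP orth_sets by (intro finite_measure_mono) auto
    with k show "measure P {x. x \<le> z} > 1/2" by simp
  qed
qed

lemma sq_le_quarter: fixes t :: real assumes "-(1/2) \<le> t" "t \<le> 1/2" shows "t^2 \<le> 1/4"
proof -
  have "0 \<le> (1/2 - t) * (1/2 + t)" using assms by (intro mult_nonneg_nonneg) auto
  then show ?thesis by (simp add: power2_eq_square algebra_simps)
qed

lemma norm_sq_cube:
  fixes x :: "real^'p::finite"
  assumes "\<And>i. -(1/2) \<le> x$i \<and> x$i \<le> 1/2"
  shows "(norm x)^2 \<le> real CARD('p) / 4"
proof -
  have "(norm x)^2 = (\<Sum>i\<in>UNIV. (x$i)^2)"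
    by (simp add: norm_vec_def L2_set_def sum_nonneg)
  also have "\<dots> \<le> (\<Sum>i\<in>(UNIV::'p set). 1/4)"
    using assms sq_le_quarter by (intro sum_mono) auto
  finally show ?thesis by simp
qed

lemma gauss_facts:
  fixes P :: "(real^'p::finite) measure" and V :: "real^'p^'p"
  assumes P: "prob_space P" and sP: "sets P = sets borel"
    and sym: "symm V" and pd: "\<And>y. m * (norm y)^2 \<le> y \<bullet> (V *v y)" and m: "m > 0"
    and close: "\<And>z. \<bar>measure P {x. x \<le> z} - gauss_cdf V z\<bar> \<le> e" and e: "e \<le> 1/4"
  shows "sqrt ((2*pi)^CARD('p) * det V) > 0"
    and "\<And>z. emeasure (density lborel (\<lambda>x. ennreal (gauss_pdf V x))) {x. x \<le> z} < \<infinity>"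
    and "\<And>z. measure (density lborel (\<lambda>x. ennreal (gauss_pdf V x))) {x. x \<le> z} = gauss_cdf V z"
    and "1 / sqrt ((2*pi)^CARD('p) * det V) \<le> 2 * exp (real CARD('p) / (8*m))"
proof -
  interpret prob_space P by (rule P)
  define S where "S = sqrt ((2*pi)^CARD('p) * det V)"
  define f where "f = gauss_pdf V"
  have fS: "f x = exp (- (x \<bullet> (matrix_inv V *v x)) / 2) / S" for x
    by (simp add: f_def S_def gauss_pdf_def)
  obtain z0 where z0: "\<And>z. z0 \<le> z \<Longrightarrow> measure P {x. x \<le> z} > 1/2"
    using exists_big[OF P sP] by blast
  have cdf_big: "gauss_cdf V z > 0" if "z0 \<le> z" for z
    using z0[OF that] close[of z] e by linarith
  have Spos: "S > 0"
  proof (rule ccontr)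
    assume "\<not> S > 0"
    then have np: "f x \<le> 0" for x using fS[of x] by (simp add: divide_nonneg_nonpos)
    have "0 \<le> integral\<^sup>L lborel (\<lambda>x. - (indicator {x. x \<le> z0} x *\<^sub>R f x))"
      using np by (intro integral_nonneg_AE AE_I2) (simp add: indicator_def)
    then have "gauss_cdf V z0 \<le> 0"
      by (simp add: gauss_cdf_def set_lebesgue_integral_def f_def)
    then show False using cdf_big[of z0] by simp
  qed
  then show "sqrt ((2*pi)^CARD('p) * det V) > 0" using S_def by simp
  have fnn: "f x \<ge> 0" for x using fS[of x] Spos by simp
  have fm: "f \<in> borel_measurable lborel" using gauss_pdf_meas f_def by simp
  define N where "N z = (\<integral>\<^sup>+x. ennreal (f x) * indicator {x. x \<le> z} x \<partial>lborel)" for z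
  have cdfN: "gauss_cdf V z = enn2real (N z)" for z
  proof -
    have "gauss_cdf V z = integral\<^sup>L lborel (\<lambda>x. indicator {x. x \<le> z} x *\<^sub>R f x)"
      by (simp add: gauss_cdf_def set_lebesgue_integral_def f_def)
    also have "\<dots> = enn2real (\<integral>\<^sup>+x. ennreal (indicator {x. x \<le> z} x *\<^sub>R f x) \<partial>lborel)"
      using fnn orth_sets[of z] fm by (intro integral_eq_nn_integral) (auto simp: indicator_def)
    also have "(\<integral>\<^sup>+x. ennreal (indicator {x. x \<le> z} x *\<^sub>R f x) \<partial>lborel) = N z"
      unfolding N_def by (intro nn_integral_cong) (auto simp: indicator_def)
    finally show ?thesis .
  qed
  define \<nu> where "\<nu> = density lborel (\<lambda>x. ennreal (f x))"
  have emN: "emeasure \<nu> {x. x \<le> z} = N z" for z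
    unfolding \<nu>_def N_def using fm orth_sets[of z] by (intro emeasure_density) auto
  have Nfin: "N z < \<infinity>" for z
  proof (rule ccontr)
    assume "\<not> N z < \<infinity>"
    then have inf: "N z = \<infinity>" by (simp add: less_top[symmetric])
    define z' where "z' = (\<chi> i. max (z$i) (z0$i))"
    have "z0 \<le> z'" by (simp add: z'_def less_eq_vec_def)
    have sub: "{x. x \<le> z} \<subseteq> {x. x \<le> z'}"
      unfolding z'_def less_eq_vec_def by (auto intro: max.coboundedI1)
    have "N z \<le> N z'" unfolding N_def
      using sub by (intro nn_integral_mono) (auto simp: indicator_def)
    then have "N z' = \<infinity>" using inf by (simp add: top_unique)
    then have "gauss_cdf V z' = 0" using cdfN by simp
    then show False using cdf_big[OF \<open>z0 \<le> z'\<close>] by simp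
  qed
  show "emeasure (density lborel (\<lambda>x. ennreal (gauss_pdf V x))) {x. x \<le> z} < \<infinity>" for z
    using emN Nfin \<nu>_def f_def by simp
  show "measure (density lborel (\<lambda>x. ennreal (gauss_pdf V x))) {x. x \<le> z} = gauss_cdf V z" for z
    using emN cdfN \<nu>_def f_def by (simp add: measure_def)
  define w :: "real^'p" where "w = (1/2) *\<^sub>R 1"
  define C :: "(real^'p) set" where "C = cbox (- w) w"
  define k where "k = exp (- (real CARD('p) / (8*m))) / S"
  have lamC: "emeasure lborel C = 1"
  proof -
    have ne: "C \<noteq> {}" by (auto simp: C_def interval_eq_empty_cart w_def)
    have "emeasure lborel C = ennreal (measure lborel C)"
      using emeasure_eq_ennreal_measure[of lborel C] emeasure_lborel_cbox_finite[of "- w" w] C_def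
      by (simp add: less_top)
    also have "measure lborel C = 1" using content_cbox_cart[OF ne[unfolded C_def]] C_def w_def by simp
    finally show ?thesis by simp
  qed
  have klow: "k \<le> f x" if "x \<in> C" for x
  proof -
    have "\<And>i. -(1/2) \<le> x$i \<and> x$i \<le> 1/2" using that by (auto simp: C_def mem_box_cart w_def)
    then have "(norm x)^2 \<le> real CARD('p) / 4" by (rule norm_sq_cube)
    then have "x \<bullet> (matrix_inv V *v x) \<le> real CARD('p) / 4 / m"
      using quad_facts(4)[OF sym pd m, of x] m by (meson divide_right_mono less_imp_le order_trans)
    then have "- (real CARD('p) / (8*m)) \<le> - (x \<bullet> (matrix_inv V *v x)) / 2"
      using m by (simp add: field_simps)
    then show ?thesis unfolding k_def fS using Spos by (intro divide_right_mono) auto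
  qed
  have "ennreal k = (\<integral>\<^sup>+x. ennreal k * indicator C x \<partial>lborel)"
    using lamC by (subst nn_integral_cmult_indicator) (auto simp: C_def)
  also have "\<dots> \<le> N w" unfolding N_def
    using klow by (intro nn_integral_mono) (auto simp: indicator_def C_def mem_box_cart less_eq_vec_def intro!: ennreal_leI)
  also have "N w = ennreal (gauss_cdf V w)" using cdfN Nfin
    by (simp add: ennreal_enn2real less_top)
  finally have "ennreal k \<le> ennreal (gauss_cdf V w)" .
  moreover have "gauss_cdf V w \<ge> 0" using cdfN by simp
  ultimately have kc: "k \<le> gauss_cdf V w" by (simp add: ennreal_le_iff)
  have "measure P {x. x \<le> w} \<le> 1" by simp
  then have "gauss_cdf V w \<le> 5/4" using close[of w] e by linarith
  with kc have k54: "k \<le> 5/4" by simp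
  have "1 / S = k * exp (real CARD('p) / (8*m))"
    unfolding k_def using exp_minus_inverse[of "real CARD('p) / (8*m)"]
    by (simp add: mult.commute)
  also have "\<dots> \<le> 5/4 * exp (real CARD('p) / (8*m))"
    using k54 by (intro mult_right_mono) auto
  also have "\<dots> \<le> 2 * exp (real CARD('p) / (8*m))" by simp
  finally show "1 / sqrt ((2*pi)^CARD('p) * det V) \<le> 2 * exp (real CARD('p) / (8*m))"
    using S_def by simp
qed


lemma norm_box_bound:
  fixes x c :: "real^'p::finite"
  assumes "\<And>i. \<bar>x$i - c$i\<bar> \<le> r"
  shows "norm (x - c) \<le> sqrt (real CARD('p)) * r"
proof -
  have r: "r \<ge> 0" using assms[of undefined] by linarith
  have "norm (x - c) = sqrt (\<Sum>i\<in>UNIV. ((x - c)$i)^2)"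
    by (simp add: norm_vec_def L2_set_def)
  also have "\<dots> \<le> sqrt (\<Sum>i\<in>(UNIV::'p set). r^2)"
  proof (intro real_sqrt_le_mono sum_mono)
    fix i
    have "\<bar>(x - c)$i\<bar> \<le> \<bar>r\<bar>" using assms[of i] r by simp
    then show "((x - c)$i)^2 \<le> r^2" by (simp add: abs_le_square_iff)
  qed
  also have "\<dots> = sqrt (real CARD('p)) * r" using r by (simp add: real_sqrt_mult)
  finally show ?thesis .
qed

lemma dens_upper:
  fixes f :: "real^'p::finite \<Rightarrow> real"
  assumes fm: "f \<in> borel_measurable borel" and E: "E \<in> sets borel"
    and U: "\<And>x. x \<in> E \<Longrightarrow> f x \<le> U" and U0: "U \<ge> 0" and v0: "vol \<ge> 0"
    and lam: "emeasure lborel E = ennreal vol"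
  shows "emeasure (density lborel (\<lambda>x. ennreal (f x))) E \<le> ennreal (U * vol)"
proof -
  have "emeasure (density lborel (\<lambda>x. ennreal (f x))) E = (\<integral>\<^sup>+x. ennreal (f x) * indicator E x \<partial>lborel)"
    using fm E by (intro emeasure_density) auto
  also have "\<dots> \<le> (\<integral>\<^sup>+x. ennreal U * indicator E x \<partial>lborel)"
    using U by (intro nn_integral_mono) (auto simp: indicator_def intro!: ennreal_leI)
  also have "\<dots> = ennreal U * ennreal vol" using E lam by (subst nn_integral_cmult_indicator) auto
  also have "\<dots> \<le> ennreal (U * vol)" using U0 v0 by (simp add: ennreal_mult)
  finally show ?thesis .
qed

lemma dens_lower:
  fixes f :: "real^'p::finite \<Rightarrow> real"
  assumes fm: "f \<in> borel_measurable borel" and E: "E \<in> sets borel"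
    and L: "\<And>x. x \<in> E \<Longrightarrow> Lo \<le> f x" and L0: "Lo \<ge> 0" and v0: "vol \<ge> 0"
    and lam: "emeasure lborel E = ennreal vol"
  shows "ennreal (Lo * vol) \<le> emeasure (density lborel (\<lambda>x. ennreal (f x))) E"
proof -
  have "ennreal (Lo * vol) = ennreal Lo * ennreal vol" using L0 v0 by (simp add: ennreal_mult)
  also have "\<dots> = (\<integral>\<^sup>+x. ennreal Lo * indicator E x \<partial>lborel)" using E lam by (subst nn_integral_cmult_indicator) auto
  also have "\<dots> \<le> (\<integral>\<^sup>+x. ennreal (f x) * indicator E x \<partial>lborel)"
    using L by (intro nn_integral_mono) (auto simp: indicator_def intro!: ennreal_leI)
  also have "\<dots> = emeasure (density lborel (\<lambda>x. ennreal (f x))) E"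
    using fm E by (intro emeasure_density[symmetric]) auto
  finally show ?thesis .
qed

lemma limit_step:
  fixes X A B h D :: real and p :: nat
  assumes "\<And>\<eta>. 0 < \<eta> \<Longrightarrow> \<eta> < 1 \<Longrightarrow> X \<le> (A + B * (h/2 + \<eta>)) * (h + \<eta>) ^ p + D"
  shows "X \<le> (A + B * (h/2)) * h ^ p + D"
proof -
  have lim: "((\<lambda>\<eta>. (A + B * (h/2 + \<eta>)) * (h + \<eta>) ^ p + D) \<longlongrightarrow> (A + B * (h/2 + 0)) * (h + 0) ^ p + D) (at_right 0)"
    by (intro tendsto_intros)
  have ev: "eventually (\<lambda>\<eta>. X \<le> (A + B * (h/2 + \<eta>)) * (h + \<eta>) ^ p + D) (at_right (0::real))"
    using assms by (intro eventually_at_rightI[of 0 1]) auto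
  have "X \<le> (A + B * (h/2 + 0)) * (h + 0) ^ p + D"
    by (rule tendsto_lowerbound[OF lim ev]) (simp add: trivial_limit_at_right_real)
  then show ?thesis by simp
qed

lemma core:
  fixes P :: "(real^'p::finite) measure" and V :: "real^'p^'p" and c :: "real^'p"
  assumes P: "prob_space P" and sP: "sets P = sets borel"
    and sym: "symm V" and pd: "\<And>y. m * (norm y)^2 \<le> y \<bullet> (V *v y)" and m: "m > 0"
    and close: "\<And>z. \<bar>measure P {x. x \<le> z} - gauss_cdf V z\<bar> \<le> e"
    and e0: "0 \<le> e" and e: "e \<le> 1/4" and h: "h > 0"
  shows "\<bar>measure P (cbox (c - (h/2) *\<^sub>R 1) (c + (h/2) *\<^sub>R 1)) / h ^ CARD('p) - gauss_pdf V c\<bar>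
     \<le> (2 * exp (real CARD('p) / (8*m)) / sqrt m * sqrt (real CARD('p))) * h + 2 ^ CARD('p) * e / h ^ CARD('p)"
proof -
  interpret prob_space P by (rule P)
  define p where "p = CARD('p)"
  define K0 where "K0 = 2 * exp (real CARD('p) / (8*m))"
  define Lc where "Lc = K0 / sqrt m * sqrt (real CARD('p))"
  define f where "f = gauss_pdf V"
  define \<nu> where "\<nu> = density lborel (\<lambda>x. ennreal (f x))"
  define a where "a = c - (h/2) *\<^sub>R (1::real^'p)"
  define b where "b = c + (h/2) *\<^sub>R (1::real^'p)"
  define B where "B = cbox a b"
  define S where "S = sqrt ((2*pi)^CARD('p) * det V)"
  note GF = gauss_facts[OF P sP sym pd m close e]
  have Spos: "S > 0" using GF(1) S_def by simp
  have Kb: "1/S \<le> K0" using GF(4) S_def K0_def by simp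
  have fnn: "f x \<ge> 0" for x
  proof -
    have "f x = exp (- (x \<bullet> (matrix_inv V *v x)) / 2) / S" by (simp add: f_def gauss_pdf_def S_def)
    then show ?thesis using Spos by simp
  qed
  have fm: "f \<in> borel_measurable borel" using gauss_pdf_meas f_def by simp
  have K0pos: "K0 \<ge> 0" unfolding K0_def by simp
  have Lc0: "Lc \<ge> 0" unfolding Lc_def using K0pos m by simp
  have lipbox: "\<bar>f x - f c\<bar> \<le> Lc * r" if "\<And>i. \<bar>x$i - c$i\<bar> \<le> r" for x r
  proof -
    have "\<bar>f x - f c\<bar> \<le> \<bar>1/S\<bar> * norm (x - c) / sqrt m"
      using gauss_pdf_lip[OF sym pd m, of x c] by (simp add: f_def S_def)
    also have "\<dots> \<le> K0 * (sqrt (real CARD('p)) * r) / sqrt m"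
    proof -
      have k1: "\<bar>1/S\<bar> \<le> K0" using Kb Spos by simp
      have k2: "norm (x - c) \<le> sqrt (real CARD('p)) * r" by (rule norm_box_bound[OF that])
      have "\<bar>1/S\<bar> * norm (x - c) \<le> K0 * (sqrt (real CARD('p)) * r)"
        using k1 k2 K0pos by (intro mult_mono) auto
      then show ?thesis using m by (intro divide_right_mono) auto
    qed
    also have "\<dots> = Lc * r" by (simp add: Lc_def)
    finally show ?thesis .
  qed
  have snu: "sets \<nu> = sets borel" by (simp add: \<nu>_def)
  have nucdf: "measure \<nu> {x. x \<le> z} = gauss_cdf V z" for z using GF(3) \<nu>_def f_def by simp
  have nufin: "emeasure \<nu> {x. x \<le> z} < \<infinity>" for z using GF(2) \<nu>_def f_def by simp
  have IE: "\<bar>measure P (Eset a' b' UNIV) - measure \<nu> (Eset a' b' UNIV)\<bar> \<le> 2 ^ p * e" for a' b'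
  proof -
    have "\<bar>measure P (Eset a' b' UNIV) - measure \<nu> (Eset a' b' UNIV)\<bar> \<le> 2 ^ card (UNIV::'p set) * e"
      using close nucdf nufin by (intro IE_bound[OF sP snu]) (auto simp: less_top[symmetric])
    then show ?thesis by (simp add: p_def)
  qed
  have Efin: "emeasure \<nu> (Eset a' b' UNIV) \<noteq> \<infinity>" for a' b'
  proof -
    have "Eset a' b' UNIV \<subseteq> {x. x \<le> b'}" by (auto simp: Eset_def less_eq_vec_def)
    then have "emeasure \<nu> (Eset a' b' UNIV) \<le> emeasure \<nu> {x. x \<le> b'}"
      using snu orth_sets by (intro emeasure_mono) auto
    then show ?thesis using nufin[of b'] by (simp add: less_top[symmetric]) (metis le_less_trans top.not_eq_extremum)
  qed
  have hp: "h ^ p > 0" using h by simp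
  have PB: "B \<in> sets P" using sP B_def by simp
  define Lo where "Lo = f c - Lc * (h/2)"
  have low: "Lo * h ^ p - 2 ^ p * e \<le> measure P B"
  proof -
    define E0 where "E0 = Eset a b UNIV"
    have E0B: "E0 \<subseteq> B" by (auto simp: E0_def B_def Eset_UNIV mem_box_cart less_imp_le)
    have lam: "emeasure lborel E0 = ennreal (h ^ p)"
      unfolding E0_def using h by (subst lborel_Eset) (auto simp: a_def b_def p_def)
    have "Lo * h ^ p \<le> measure \<nu> E0"
    proof (cases "Lo \<ge> 0")
      case True
      have inE: "Lo \<le> f x" if "x \<in> E0" for x
      proof -
        have xi: "c$i - h/2 < x$i \<and> x$i \<le> c$i + h/2" for i using that by (simp add: E0_def Eset_UNIV a_def b_def)
        have "\<bar>x$i - c$i\<bar> \<le> h/2" for i unfolding abs_le_iff using xi[of i] by linarith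
        then have "\<bar>f x - f c\<bar> \<le> Lc * (h/2)" by (rule lipbox)
        then show ?thesis unfolding Lo_def by linarith
      qed
      have "ennreal (Lo * h ^ p) \<le> emeasure \<nu> E0"
        unfolding \<nu>_def using fm Eset_sets inE True hp lam E0_def by (intro dens_lower) auto
      also have "\<dots> = ennreal (measure \<nu> E0)" using Efin E0_def by (simp add: emeasure_eq_ennreal_measure)
      finally show ?thesis by simp
    next
      case False
      then have "Lo * h ^ p \<le> 0" using hp by (simp add: mult_nonpos_nonneg)
      then show ?thesis by (meson measure_nonneg order_trans)
    qed
    moreover have "measure \<nu> E0 - 2 ^ p * e \<le> measure P E0" using IE[of a b] unfolding E0_def by linarith
    moreover have "measure P E0 \<le> measure P B" using E0B PB by (intro finite_measure_mono) auto
    ultimately show ?thesis by linarith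
  qed
  have upe: "measure P B \<le> (f c + Lc * (h/2 + \<eta>)) * (h + \<eta>) ^ p + 2 ^ p * e" if \<eta>: "0 < \<eta>" "\<eta> < 1" for \<eta>
  proof -
    define E where "E = Eset (a - \<eta> *\<^sub>R 1) b UNIV"
    have BE: "B \<subseteq> E"
    proof
      fix x assume "x \<in> B"
      then have xi: "a$i \<le> x$i \<and> x$i \<le> b$i" for i by (simp add: B_def mem_box_cart)
      have "(a - \<eta> *\<^sub>R 1)$i < x$i \<and> x$i \<le> b$i" for i using xi[of i] \<eta> by simp
      then show "x \<in> E" by (simp add: E_def Eset_UNIV)
    qed
    have lam: "emeasure lborel E = ennreal ((h + \<eta>) ^ p)"
    proof -
      have le: "(a - \<eta> *\<^sub>R 1)$i \<le> b$i" for i using h \<eta> by (simp add: a_def b_def)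
      have "emeasure lborel E = ennreal (\<Prod>i\<in>UNIV. b$i - (a - \<eta> *\<^sub>R 1)$i)"
        unfolding E_def by (rule lborel_Eset[OF le])
      also have "(\<Prod>i\<in>UNIV. b$i - (a - \<eta> *\<^sub>R 1)$i) = (\<Prod>i\<in>(UNIV::'p set). h + \<eta>)"
        by (rule prod.cong) (simp_all add: a_def b_def)
      finally show ?thesis by (simp add: p_def)
    qed
    have inE: "f x \<le> f c + Lc * (h/2 + \<eta>)" if "x \<in> E" for x
    proof -
      have xi: "c$i - h/2 - \<eta> < x$i \<and> x$i \<le> c$i + h/2" for i using that by (simp add: E_def Eset_UNIV a_def b_def)
      have "\<bar>x$i - c$i\<bar> \<le> h/2 + \<eta>" for i unfolding abs_le_iff using xi[of i] \<eta> by linarith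
      then have "\<bar>f x - f c\<bar> \<le> Lc * (h/2 + \<eta>)" by (rule lipbox)
      then show ?thesis by linarith
    qed
    have U0: "f c + Lc * (h/2 + \<eta>) \<ge> 0" using fnn[of c] Lc0 h \<eta> by simp
    have "emeasure \<nu> E \<le> ennreal ((f c + Lc * (h/2 + \<eta>)) * (h + \<eta>) ^ p)"
      unfolding \<nu>_def using fm Eset_sets inE U0 h \<eta> lam E_def by (intro dens_upper) auto
    then have "measure \<nu> E \<le> (f c + Lc * (h/2 + \<eta>)) * (h + \<eta>) ^ p"
      unfolding measure_def using U0 h \<eta> by (intro enn2real_leI) auto
    moreover have "measure P E \<le> measure \<nu> E + 2 ^ p * e" using IE[of "a - \<eta> *\<^sub>R 1" b] unfolding E_def by linarith
    moreover have "measure P B \<le> measure P E" using BE sP E_def Eset_sets by (intro finite_measure_mono) auto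
    ultimately show ?thesis by linarith
  qed
  have up: "measure P B \<le> (f c + Lc * (h/2)) * h ^ p + 2 ^ p * e"
    by (rule limit_step) (rule upe)
  have u2: "measure P B / h ^ p \<le> f c + Lc * (h/2) + 2 ^ p * e / h ^ p"
  proof -
    have "measure P B / h ^ p \<le> ((f c + Lc * (h/2)) * h ^ p + 2 ^ p * e) / h ^ p"
      using up hp by (intro divide_right_mono) auto
    also have "\<dots> = f c + Lc * (h/2) + 2 ^ p * e / h ^ p" using hp h by (simp add: add_divide_distrib)
    finally show ?thesis .
  qed
  have l2: "f c - Lc * (h/2) - 2 ^ p * e / h ^ p \<le> measure P B / h ^ p"
  proof -
    have "f c - Lc * (h/2) - 2 ^ p * e / h ^ p = (Lo * h ^ p - 2 ^ p * e) / h ^ p"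
      using hp h by (simp add: diff_divide_distrib Lo_def)
    also have "\<dots> \<le> measure P B / h ^ p" using low hp by (intro divide_right_mono) auto
    finally show ?thesis .
  qed
  have "Lc * (h/2) \<le> Lc * h" using Lc0 h by (intro mult_left_mono) auto
  with u2 l2 have "\<bar>measure P B / h ^ p - f c\<bar> \<le> Lc * h + 2 ^ p * e / h ^ p" by linarith
  then show ?thesis by (simp add: B_def a_def b_def p_def f_def Lc_def K0_def)
qed

lemma supnorm_ge: "\<bar>x$i\<bar> \<le> supnorm (x::real^'p::finite)"
  unfolding supnorm_def by (rule Max_ge) auto

lemma supnorm_le_iff: "supnorm (x::real^'p::finite) \<le> r \<longleftrightarrow> (\<forall>i. \<bar>x$i\<bar> \<le> r)"
  unfolding supnorm_def by (subst Max_le_iff) auto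

lemma norm_le_supnorm: "norm (x::real^'p::finite) \<le> sqrt (real CARD('p)) * supnorm x"
  using norm_box_bound[of x 0 "supnorm x"] supnorm_ge[of x] by simp

lemma supnorm_mult: "supnorm ((D::real^'p::finite^'q::finite) *v y) \<le> matnorm_inf D * supnorm y"
proof -
  have "\<bar>(D *v y)$i\<bar> \<le> matnorm_inf D * supnorm y" for i
  proof -
    have "\<bar>(D *v y)$i\<bar> = \<bar>\<Sum>j\<in>UNIV. D$i$j * y$j\<bar>" by (simp add: matrix_vector_mult_def)
    also have "\<dots> \<le> (\<Sum>j\<in>UNIV. \<bar>D$i$j\<bar> * \<bar>y$j\<bar>)" by (rule order_trans[OF sum_abs]) (simp add: abs_mult)?
    also have "\<dots> \<le> (\<Sum>j\<in>UNIV. \<bar>D$i$j\<bar> * supnorm y)"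
      by (intro sum_mono mult_left_mono supnorm_ge) auto
    also have "\<dots> = (\<Sum>j\<in>UNIV. \<bar>D$i$j\<bar>) * supnorm y" by (simp add: sum_distrib_right)
    also have "\<dots> \<le> matnorm_inf D * supnorm y"
    proof (rule mult_right_mono)
      show "(\<Sum>j\<in>UNIV. \<bar>D$i$j\<bar>) \<le> matnorm_inf D" unfolding matnorm_inf_def by (rule Max_ge) auto
      show "0 \<le> supnorm y" using supnorm_ge[of y] abs_ge_zero order_trans by blast
    qed
    finally show ?thesis .
  qed
  then show ?thesis by (simp add: supnorm_le_iff)
qed

lemma posdef_min:
  fixes A :: "real^'p::finite^'p"
  assumes "pos_def A"
  shows "\<exists>m0>0. \<forall>y. m0 * (norm y)^2 \<le> y \<bullet> (A *v y)"
proof -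
  define g where "g y = y \<bullet> (A *v y)" for y :: "real^'p"
  have cont: "continuous_on (sphere 0 1) g"
  proof -
    have "continuous_on UNIV (\<lambda>z::real^'p. A *v z)"
      by (intro linear_continuous_on matrix_vector_mul_bounded_linear)
    then show ?thesis unfolding g_def
      by (intro continuous_intros) (auto intro: continuous_on_subset)?
  qed
  obtain u :: "real^'p" where u: "norm u = 1" using vector_choose_size[of 1] by auto
  have ne: "sphere (0::real^'p) 1 \<noteq> {}" using u by auto
  obtain y0 where y0: "y0 \<in> sphere 0 1" and ymin: "\<And>y. y \<in> sphere 0 1 \<Longrightarrow> g y0 \<le> g y"
    using continuous_attains_inf[OF compact_sphere ne cont] by blast
  have "y0 \<noteq> 0" using y0 by auto
  then have m0: "g y0 > 0" using assms unfolding pos_def_def g_def by auto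
  have "g y0 * (norm y)^2 \<le> y \<bullet> (A *v y)" for y
  proof (cases "y = 0")
    case True then show ?thesis by simp
  next
    case False
    define v where "v = (1 / norm y) *\<^sub>R y"
    have "v \<in> sphere 0 1" using False by (simp add: v_def)
    then have "g y0 \<le> g v" by (rule ymin)
    moreover have "g y = (norm y)^2 * g v"
    proof -
      have "y = norm y *\<^sub>R v" using False by (simp add: v_def)
      then have "g y = g (norm y *\<^sub>R v)" by simp
      also have "\<dots> = (norm y)^2 * g v" by (simp add: g_def matrix_vector_mult_scaleR power2_eq_square)
      finally show ?thesis .
    qed
    ultimately have "g y0 * (norm y)^2 \<le> g y" by (simp add: mult_right_mono mult.commute)
    then show ?thesis unfolding g_def .
  qed
  then show ?thesis using m0 by blast
qed

lemma symm_rcov: "symm (rcov_scaled n Q)"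
  by (simp add: symm_def rcov_scaled_def mult.commute)

lemma pd_perturb:
  fixes V W Vmin :: "real^'p::finite^'p"
  assumes m0: "\<And>y. m0 * (norm y)^2 \<le> y \<bullet> (Vmin *v y)" and lw: "loewner_le Vmin V"
    and cl: "matnorm_inf (W - V) \<le> m0 / (2 * sqrt (real CARD('p)))" and m0p: "m0 > 0"
  shows "(m0/2) * (norm y)^2 \<le> y \<bullet> (W *v y)"
proof -
  define D where "D = W - V"
  have sp: "sqrt (real CARD('p)) > 0" by simp
  have "norm (D *v y) \<le> sqrt (real CARD('p)) * supnorm (D *v y)" by (rule norm_le_supnorm)
  also have "\<dots> \<le> sqrt (real CARD('p)) * (matnorm_inf D * supnorm y)"
    using sp supnorm_mult by (intro mult_left_mono) auto
  also have "\<dots> \<le> sqrt (real CARD('p)) * (m0 / (2 * sqrt (real CARD('p))) * norm y)"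
  proof -
    have sn: "0 \<le> supnorm y" using supnorm_ge[of y] abs_ge_zero order_trans by blast
    have "supnorm y \<le> norm y" unfolding supnorm_le_iff using component_le_norm_cart by blast
    moreover have "matnorm_inf D \<ge> 0"
    proof -
      have "0 \<le> (\<Sum>j\<in>UNIV. \<bar>D$undefined$j\<bar>)" by (simp add: sum_nonneg)
      also have "\<dots> \<le> matnorm_inf D" unfolding matnorm_inf_def by (rule Max_ge) auto
      finally show ?thesis .
    qed
    ultimately have "matnorm_inf D * supnorm y \<le> m0 / (2 * sqrt (real CARD('p))) * norm y"
      using cl D_def sn by (intro mult_mono) auto
    then show ?thesis using sp by (intro mult_left_mono) auto
  qed
  also have "\<dots> = m0 / 2 * norm y" using sp by simp
  finally have nd: "norm (D *v y) \<le> m0 / 2 * norm y" .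
  have "\<bar>y \<bullet> (D *v y)\<bar> \<le> norm y * norm (D *v y)" by (rule Cauchy_Schwarz_ineq2)
  also have "\<dots> \<le> norm y * (m0 / 2 * norm y)" using nd by (intro mult_left_mono) auto
  finally have c1: "\<bar>y \<bullet> (D *v y)\<bar> \<le> m0 / 2 * (norm y)^2" by (simp add: power2_eq_square mult.commute mult.left_commute)
  have "y \<bullet> (W *v y) = y \<bullet> (V *v y) + y \<bullet> (D *v y)"
    by (simp add: D_def matrix_vector_mult_diff_rdistrib inner_diff_right)
  moreover have "y \<bullet> (Vmin *v y) \<le> y \<bullet> (V *v y)" using lw unfolding loewner_le_def by blast
  ultimately show ?thesis using m0[of y] c1 by linarith
qed

lemma prob_Int_ge:
  assumes "prob_space M" "A \<in> sets M" "B \<in> sets M"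
  shows "measure M (A \<inter> B) \<ge> measure M A + measure M B - 1"
proof -
  interpret prob_space M by fact
  have "measure M (A \<union> B) = measure M A + measure M B - measure M (A \<inter> B)"
    using assms by (intro measure_Un3) (auto simp: fmeasurable_def less_top[symmetric])
  moreover have "measure M (A \<union> B) \<le> 1" by simp
  ultimately show ?thesis by linarith
qed

lemma gamma_part:
  fixes p :: nat assumes p: "p \<ge> 1"
  shows "let \<alpha>' = (2 + real p) / (2 * (real p + 1)) in
              1/2 < \<alpha>' \<and> \<alpha>' < (real p + 1) / (2 * real p) \<and>
              gamma_rate p \<alpha>' = - 1 / (2 * (real p + 1)) \<and>
              (\<forall>a. 1/2 < a \<and> a < (real p + 1) / (2 * real p) \<longrightarrow>
                    gamma_rate p \<alpha>' \<le> gamma_rate p a)"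
proof -
  define q where "q = real p"
  have q: "q \<ge> 1" using p q_def by simp
  define \<alpha>' where "\<alpha>' = (2 + q) / (2 * (q + 1))"
  have a1: "1/2 < \<alpha>'" using q by (simp add: \<alpha>'_def field_simps)
  have a2: "\<alpha>' < (q + 1) / (2 * q)" using q by (simp add: \<alpha>'_def field_simps power2_eq_square)
  have u: "q * (\<alpha>' - 1/2) - 1/2 = - 1 / (2 * (q + 1))" using q by (simp add: \<alpha>'_def field_simps)
  have v: "1/2 - \<alpha>' = - 1 / (2 * (q + 1))" using q by (simp add: \<alpha>'_def field_simps)
  have g: "gamma_rate p \<alpha>' = - 1 / (2 * (q + 1))" unfolding gamma_rate_def q_def[symmetric] using u v by simp
  have opt: "gamma_rate p \<alpha>' \<le> gamma_rate p a" for a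
  proof -
    define U where "U = q * (a - 1/2) - 1/2"
    define W where "W = 1/2 - a"
    have sum: "U + q * W = - 1/2" by (simp add: U_def W_def algebra_simps)
    have "(q + 1) * max U W \<ge> U + q * W"
    proof -
      have "U \<le> max U W" "q * W \<le> q * max U W" using q by (auto intro: mult_left_mono)
      then show ?thesis by (simp add: algebra_simps)
    qed
    then have "(q + 1) * max U W \<ge> - 1/2" using sum by simp
    then have "max U W \<ge> - 1 / (2 * (q + 1))" using q by (simp add: field_simps)
    then show ?thesis using g unfolding gamma_rate_def q_def[symmetric] U_def W_def by simp
  qed
  show ?thesis unfolding Let_def q_def[symmetric] \<alpha>'_def[symmetric] using a1 a2 g opt by blast
qed

lemma aux_div: "(k::real) \<noteq> 0 \<Longrightarrow> k * (c / a) / (k * b) = c / (a * b)"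
  by (cases "a = 0"; cases "b = 0") (auto simp: field_simps)

lemma rate:
  fixes n p :: nat and \<alpha> Lc C' :: real
  assumes n: "n \<ge> 1" and Lc: "Lc \<ge> 0" and C': "C' \<ge> 0"
  shows "Lc * (2 * real n powr (-\<alpha>) * sqrt (real n)) + 2 ^ p * (C' / sqrt (real n)) / (2 * real n powr (-\<alpha>) * sqrt (real n)) ^ p
     \<le> (2 * Lc + C') * real n powr gamma_rate p \<alpha>"
proof -
  define x where "x = real n"
  have x: "x \<ge> 1" using n x_def by simp
  have x0: "x > 0" using x by simp
  have sq: "sqrt x = x powr (1/2)" using x0 by (simp add: powr_half_sqrt)
  have hx: "2 * x powr (-\<alpha>) * sqrt x = 2 * x powr (1/2 - \<alpha>)"
    unfolding sq by (simp add: powr_add[symmetric])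
  have hp: "(x powr (1/2 - \<alpha>)) ^ p = x powr (real p * (1/2 - \<alpha>))"
  proof -
    have "(x powr (1/2 - \<alpha>)) ^ p = (x powr (1/2 - \<alpha>)) powr real p"
      using x0 by (intro powr_realpow[symmetric]) simp
    also have "\<dots> = x powr ((1/2 - \<alpha>) * real p)" by (rule powr_powr)
    finally show ?thesis by (simp only: mult.commute)
  qed
  have t1: "Lc * (2 * x powr (1/2 - \<alpha>)) \<le> 2 * Lc * x powr gamma_rate p \<alpha>"
  proof -
    have "x powr (1/2 - \<alpha>) \<le> x powr gamma_rate p \<alpha>"
      using x by (intro powr_mono) (auto simp: gamma_rate_def)
    then show ?thesis using Lc by (simp add: mult_left_mono)
  qed
  have t2: "2 ^ p * (C' / sqrt x) / (2 * x powr (1/2 - \<alpha>)) ^ p = C' * x powr (real p * (\<alpha> - 1/2) - 1/2)"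
  proof -
    have "2 ^ p * (C' / sqrt x) / (2 * x powr (1/2 - \<alpha>)) ^ p = 2 ^ p * (C' / x powr (1/2)) / (2 ^ p * x powr (real p * (1/2 - \<alpha>)))"
      unfolding power_mult_distrib hp sq by (rule refl)
    also have "\<dots> = C' / (x powr (1/2) * x powr (real p * (1/2 - \<alpha>)))"
      by (rule aux_div) simp
    also have "x powr (1/2) * x powr (real p * (1/2 - \<alpha>)) = x powr (1/2 + real p * (1/2 - \<alpha>))"
      by (rule powr_add[symmetric])
    also have "C' / x powr (1/2 + real p * (1/2 - \<alpha>)) = C' * x powr (- (1/2 + real p * (1/2 - \<alpha>)))"
      by (simp only: powr_minus divide_inverse)
    also have "- (1/2 + real p * (1/2 - \<alpha>)) = real p * (\<alpha> - 1/2) - 1/2" by (simp add: algebra_simps)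
    finally show ?thesis .
  qed
  have t3: "C' * x powr (real p * (\<alpha> - 1/2) - 1/2) \<le> C' * x powr gamma_rate p \<alpha>"
    using x C' by (intro mult_left_mono powr_mono) (auto simp: gamma_rate_def)
  have "(2 * Lc + C') * x powr gamma_rate p \<alpha> = 2 * Lc * x powr gamma_rate p \<alpha> + C' * x powr gamma_rate p \<alpha>"
    by (rule distrib_right)
  then show ?thesis unfolding x_def[symmetric] hx t2 using t1 t3 by linarith
qed

lemma box_iff_aux:
  fixes t s r x \<rho> :: real
  assumes t: "t > 0"
  shows "(t * (s - r) - t * \<rho> \<le> t * (x - r) \<and> t * (x - r) \<le> t * (s - r) + t * \<rho>) \<longleftrightarrow> \<bar>x - s\<bar> \<le> \<rho>"
proof -
  have e1: "t * (s - r) - t * \<rho> = t * (s - r - \<rho>)" by (simp add: algebra_simps)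
  have e2: "t * (s - r) + t * \<rho> = t * (s - r + \<rho>)" by (simp add: algebra_simps)
  show ?thesis unfolding e1 e2 mult_le_cancel_left_pos[OF t] abs_le_iff by linarith
qed

theorem lemma1:
  fixes M :: "'w measure"
    and Q :: "nat \<Rightarrow> 'w \<Rightarrow> real^'p::finite \<Rightarrow> (real^'p) measure"
    and s :: "nat \<Rightarrow> 'w \<Rightarrow> real^'p"
    and T :: "(real^'p) set"
    and prior :: "nat \<Rightarrow> 'w \<Rightarrow> real^'p \<Rightarrow> real"
    and r :: "real^'p \<Rightarrow> real^'p"
    and V :: "real^'p \<Rightarrow> real^'p^'p"
    and \<theta>s :: "real^'p"
    and \<delta> \<alpha> :: real
  defines "rn \<equiv> \<lambda>n w \<theta>. rmean (Q n w \<theta>)"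
      and "Vn \<equiv> \<lambda>n w \<theta>. rcov_scaled n (Q n w \<theta>)"
      and "p \<equiv> CARD('p)"
  assumes M: "prob_space M"
    and s_meas: "\<And>n. s n \<in> borel_measurable M"
    and Q_prob: "\<And>n w \<theta>. w \<in> space M \<Longrightarrow> \<theta> \<in> T \<Longrightarrow> prob_space (Q n w \<theta>)"
    and Q_sets: "\<And>n w \<theta>. w \<in> space M \<Longrightarrow> \<theta> \<in> T \<Longrightarrow> sets (Q n w \<theta>) = sets borel"
    (* (A4) *)
    and A4: "\<And>n w \<theta> i j. w \<in> space M \<Longrightarrow> \<theta> \<in> T \<Longrightarrow>
               integrable (Q n w \<theta>) (\<lambda>x. x $ i) \<and> integrable (Q n w \<theta>) (\<lambda>x. x $ i * x $ j)"
    (* (A5) *)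
    and A5_compact: "compact T"
    and A5_prior: "\<And>n w \<theta>. w \<in> space M \<Longrightarrow> prior n w \<theta> \<ge> 0"
    and A5_prior_out: "\<And>n w \<theta>. w \<in> space M \<Longrightarrow> \<theta> \<notin> T \<Longrightarrow> prior n w \<theta> = 0"
    and A5_prior_int: "\<And>n w. w \<in> space M \<Longrightarrow> set_integrable lborel T (prior n w)
                          \<and> (LINT \<theta>:T|lborel. prior n w \<theta>) = 1"
    and A5_supp: "\<And>n w. w \<in> space M \<Longrightarrow> closure {\<theta>. prior n w \<theta> > 0} = T"
    (* (A6) *)
    and A6a: "\<And>e. e > 0 \<Longrightarrow> event_to_one M
                (\<lambda>n w. \<forall>\<theta>\<in>T. sqrt (real n) * supnorm (rn n w \<theta> - r \<theta>) \<le> e)"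
    and A6b_mem: "\<theta>s \<in> T"
    and A6b: "conv_prob_vec M s (r \<theta>s)"
    and A6b_uniq: "\<And>\<theta>. \<theta> \<in> T \<Longrightarrow> conv_prob_vec M s (r \<theta>) \<Longrightarrow> \<theta> = \<theta>s"
    and A6cd: "\<exists>U J. open U \<and> \<theta>s \<in> U \<and>
                 (\<forall>x\<in>U. (r has_derivative (\<lambda>h. J x *v h)) (at x)) \<and>
                 (\<forall>x\<in>U. J differentiable (at x)) \<and>
                 invertible (J \<theta>s) \<and>
                 pos_def (matrix_inv (J \<theta>s) ** V \<theta>s ** transpose (matrix_inv (J \<theta>s)))"
    (* (A7) *)
    and A7a: "\<And>e. e > 0 \<Longrightarrow> event_to_one M
                (\<lambda>n w. \<forall>\<theta>\<in>T. matnorm_inf (Vn n w \<theta> - V \<theta>) \<le> e)"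
    and A7b: "\<exists>Vmin Vmax. pos_def Vmin \<and> pos_def Vmax \<and>
                 (\<forall>\<theta>\<in>T. loewner_le Vmin (V \<theta>) \<and> loewner_le (V \<theta>) Vmax)"
    and A7c: "\<exists>U. open U \<and> \<theta>s \<in> U \<and> continuous_on U V"
    (* (A8) *)
    and A8a: "\<exists>C>0. event_to_one M (\<lambda>n w. \<forall>\<theta>\<in>T. prior n w \<theta> \<le> C)"
    and A8b: "\<exists>C>0. conv_prob_real M (\<lambda>n w. prior n w \<theta>s) C"
    and A8c: "\<And>e. e > 0 \<Longrightarrow> \<exists>d>0. event_to_one M
                (\<lambda>n w. \<forall>\<theta>. supnorm (\<theta> - \<theta>s) < d \<longrightarrow> \<bar>prior n w \<theta> - prior n w \<theta>s\<bar> < e)"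
    (* (A9) *)
    and A9: "\<And>d. 0 < d \<Longrightarrow> d < 1 \<Longrightarrow> \<exists>C::real. \<exists>N::nat. \<forall>n\<ge>N. wp_at_least M
                (\<lambda>w. \<forall>\<theta>\<in>T. \<forall>z.
                   \<bar>measure (Q n w \<theta>) {x. sqrt (real n) *\<^sub>R (x - rn n w \<theta>) \<le> z}
                    - gauss_cdf (Vn n w \<theta>) z\<bar> \<le> C / sqrt (real n)) d"
    and \<delta>: "0 < \<delta>" "\<delta> < 1"
    and \<alpha>: "1/2 < \<alpha>" "\<alpha> < (real p + 1) / (2 * real p)"
  shows "(\<exists>C::real. \<exists>N::nat. \<forall>n\<ge>N. wp_at_least M
            (\<lambda>w. \<forall>\<theta>\<in>T.
               \<bar>measure (Q n w \<theta>) (supball (s n w) (real n powr (-\<alpha>)))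
                   / (2 * real n powr (-\<alpha>) * sqrt (real n)) ^ p
                 - gauss_pdf (Vn n w \<theta>) (sqrt (real n) *\<^sub>R (s n w - rn n w \<theta>))\<bar>
               \<le> C * real n powr (gamma_rate p \<alpha>)) \<delta>)
         \<and> (let \<alpha>' = (2 + real p) / (2 * (real p + 1)) in
              1/2 < \<alpha>' \<and> \<alpha>' < (real p + 1) / (2 * real p) \<and>
              gamma_rate p \<alpha>' = - 1 / (2 * (real p + 1)) \<and>
              (\<forall>a. 1/2 < a \<and> a < (real p + 1) / (2 * real p) \<longrightarrow>
                    gamma_rate p \<alpha>' \<le> gamma_rate p a))"
proof -
  have pc: "p = CARD('p)" using p_def by simp
  obtain Vmin Vmax where pdmin: "pos_def Vmin"
    and lw: "\<And>\<theta>. \<theta> \<in> T \<Longrightarrow> loewner_le Vmin (V \<theta>)"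
    using A7b by blast
  obtain m0 where m0: "m0 > 0" and m0y: "\<And>y. m0 * (norm y)^2 \<le> y \<bullet> (Vmin *v y)"
    using posdef_min[OF pdmin] by blast
  define e0 where "e0 = m0 / (2 * sqrt (real CARD('p)))"
  have e0: "e0 > 0" using m0 by (simp add: e0_def)
  have d2: "0 < \<delta>/2" "\<delta>/2 < 1" using \<delta> by auto
  obtain N1 where N1: "\<And>n. n \<ge> N1 \<Longrightarrow> wp_at_least M (\<lambda>w. \<forall>\<theta>\<in>T. matnorm_inf (Vn n w \<theta> - V \<theta>) \<le> e0) (\<delta>/2)"
    using A7a[OF e0] d2 unfolding event_to_one_def eventually_sequentially by blast
  obtain C9 N9 where N9: "\<And>n. n \<ge> N9 \<Longrightarrow> wp_at_least M
                (\<lambda>w. \<forall>\<theta>\<in>T. \<forall>z.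
                   \<bar>measure (Q n w \<theta>) {x. sqrt (real n) *\<^sub>R (x - rn n w \<theta>) \<le> z}
                    - gauss_cdf (Vn n w \<theta>) z\<bar> \<le> C9 / sqrt (real n)) (\<delta>/2)"
    using A9[OF d2] by blast
  define C' where "C' = max C9 0"
  have C'0: "C' \<ge> 0" by (simp add: C'_def)
  define m where "m = m0 / 2"
  have m: "m > 0" using m0 by (simp add: m_def)
  define Lc where "Lc = 2 * exp (real CARD('p) / (8*m)) / sqrt m * sqrt (real CARD('p))"
  have Lc0: "Lc \<ge> 0" using m by (simp add: Lc_def)
  obtain N2 :: nat where N2: "16 * C'^2 + 1 \<le> real N2" using real_arch_simple by blast
  define N where "N = max N1 (max N9 N2)"
  have main: "\<forall>n\<ge>N. wp_at_least M
            (\<lambda>w. \<forall>\<theta>\<in>T.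
               \<bar>measure (Q n w \<theta>) (supball (s n w) (real n powr (-\<alpha>)))
                   / (2 * real n powr (-\<alpha>) * sqrt (real n)) ^ p
                 - gauss_pdf (Vn n w \<theta>) (sqrt (real n) *\<^sub>R (s n w - rn n w \<theta>))\<bar>
               \<le> (2 * Lc + C') * real n powr (gamma_rate p \<alpha>)) \<delta>"
  proof (intro allI impI)
    fix n assume nN: "n \<ge> N"
    obtain A1 where A1: "A1 \<in> sets M" "measure M A1 \<ge> 1 - \<delta>/2"
      and A1p: "\<And>w. w \<in> A1 \<Longrightarrow> \<forall>\<theta>\<in>T. matnorm_inf (Vn n w \<theta> - V \<theta>) \<le> e0"
      using N1[of n] nN unfolding N_def wp_at_least_def by auto
    obtain A2 where A2: "A2 \<in> sets M" "measure M A2 \<ge> 1 - \<delta>/2"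
      and A2p: "\<And>w. w \<in> A2 \<Longrightarrow> \<forall>\<theta>\<in>T. \<forall>z.
                   \<bar>measure (Q n w \<theta>) {x. sqrt (real n) *\<^sub>R (x - rn n w \<theta>) \<le> z}
                    - gauss_cdf (Vn n w \<theta>) z\<bar> \<le> C9 / sqrt (real n)"
      using N9[of n] nN unfolding N_def wp_at_least_def by auto
    have N2n: "real N2 \<le> real n" using nN unfolding N_def by simp
    have "real n \<ge> 1" using N2n N2 by (smt (verit) zero_le_power2)
    then have n1: "n \<ge> 1" by simp
    have sn: "sqrt (real n) > 0" using n1 by simp
    have eps: "C' / sqrt (real n) \<le> 1/4"
    proof -
      have "16 * C'^2 \<le> real n" using N2n N2 by linarith
      then have "sqrt (16 * C'^2) \<le> sqrt (real n)" by (rule real_sqrt_le_mono)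
      moreover have "sqrt (16 * C'^2) = 4 * C'" using C'0 by (simp add: real_sqrt_mult)
      ultimately have "4 * C' \<le> sqrt (real n)" by simp
      then show ?thesis using sn by (simp add: field_simps)
    qed
    show "wp_at_least M
            (\<lambda>w. \<forall>\<theta>\<in>T.
               \<bar>measure (Q n w \<theta>) (supball (s n w) (real n powr (-\<alpha>)))
                   / (2 * real n powr (-\<alpha>) * sqrt (real n)) ^ p
                 - gauss_pdf (Vn n w \<theta>) (sqrt (real n) *\<^sub>R (s n w - rn n w \<theta>))\<bar>
               \<le> (2 * Lc + C') * real n powr (gamma_rate p \<alpha>)) \<delta>"
      unfolding wp_at_least_def
    proof (intro bexI conjI ballI)
      show "A1 \<inter> A2 \<in> sets M" using A1 A2 by auto
      show "measure M (A1 \<inter> A2) \<ge> 1 - \<delta>"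
        using prob_Int_ge[OF M A1(1) A2(1)] A1 A2 by linarith
      fix w \<theta> assume w: "w \<in> A1 \<inter> A2" and th: "\<theta> \<in> T"
      have wM: "w \<in> space M" using w A1(1) sets.sets_into_space by auto
      define Q' where "Q' = Q n w \<theta>"
      define V' where "V' = Vn n w \<theta>"
      define r' where "r' = rn n w \<theta>"
      define f where "f x = sqrt (real n) *\<^sub>R (x - r')" for x
      have sQ: "sets Q' = sets borel" using Q_sets[OF wM th] Q'_def by simp
      have spQ: "space Q' = UNIV" using sets_eq_imp_space_eq[OF sQ] by simp
      have symV: "symm V'" unfolding V'_def Vn_def by (rule symm_rcov)
      have pdV: "m * (norm y)^2 \<le> y \<bullet> (V' *v y)" for y
        unfolding m_def using pd_perturb[OF m0y lw[OF th] _ m0] A1p[of w] w th e0_def V'_def by auto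
      have fb: "f \<in> borel_measurable borel"
        unfolding f_def by (intro borel_measurable_continuous_onI continuous_intros)
      have fm: "f \<in> Q' \<rightarrow>\<^sub>M borel" by (subst measurable_cong_sets[OF sQ refl]) (rule fb)
      define P where "P = distr Q' borel f"
      have PP: "prob_space P" unfolding P_def
        using prob_space.prob_space_distr[OF Q_prob[OF wM th] fm[unfolded Q'_def]] Q'_def by simp
      have sP: "sets P = sets borel" by (simp add: P_def)
      have mP: "measure P S = measure Q' (f -` S)" if "S \<in> sets borel" for S
        unfolding P_def using measure_distr[OF fm that] spQ by simp
      have close: "\<bar>measure P {x. x \<le> z} - gauss_cdf V' z\<bar> \<le> C' / sqrt (real n)" for z
      proof -
        have "\<bar>measure P {x. x \<le> z} - gauss_cdf V' z\<bar> \<le> C9 / sqrt (real n)"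
          using A2p[of w] w th mP[OF orth_sets[of z]] unfolding f_def Q'_def V'_def r'_def
          by (simp add: vimage_def)
        also have "\<dots> \<le> C' / sqrt (real n)" using sn by (simp add: C'_def divide_right_mono)
        finally show ?thesis .
      qed
      define \<rho> where "\<rho> = real n powr (-\<alpha>)"
      define h where "h = 2 * \<rho> * sqrt (real n)"
      define c where "c = sqrt (real n) *\<^sub>R (s n w - r')"
      have \<rho>0: "\<rho> > 0" using n1 by (simp add: \<rho>_def)
      have h: "h > 0" using \<rho>0 sn by (simp add: h_def)
      have co: "\<bar>measure P (cbox (c - (h/2) *\<^sub>R 1) (c + (h/2) *\<^sub>R 1)) / h ^ CARD('p) - gauss_pdf V' c\<bar>
         \<le> Lc * h + 2 ^ CARD('p) * (C' / sqrt (real n)) / h ^ CARD('p)"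
        using core[OF PP sP symV pdV m close _ eps h, of c] C'0 sn unfolding Lc_def by simp
      have pre: "f -` cbox (c - (h/2) *\<^sub>R 1) (c + (h/2) *\<^sub>R 1) = supball (s n w) \<rho>"
      proof (rule set_eqI)
        fix x
        have "x \<in> f -` cbox (c - (h/2) *\<^sub>R 1) (c + (h/2) *\<^sub>R 1) \<longleftrightarrow>
            (\<forall>i. sqrt (real n) * (s n w $ i - r' $ i) - sqrt (real n) * \<rho> \<le> sqrt (real n) * (x $ i - r' $ i) \<and>
                 sqrt (real n) * (x $ i - r' $ i) \<le> sqrt (real n) * (s n w $ i - r' $ i) + sqrt (real n) * \<rho>)"
          by (simp add: f_def c_def h_def mem_box_cart algebra_simps)
        also have "\<dots> \<longleftrightarrow> (\<forall>i. \<bar>x $ i - s n w $ i\<bar> \<le> \<rho>)"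
          using box_iff_aux[OF sn] by simp
        also have "\<dots> \<longleftrightarrow> x \<in> supball (s n w) \<rho>"
          by (simp add: supball_def supnorm_le_iff)
        finally show "x \<in> f -` cbox (c - (h/2) *\<^sub>R 1) (c + (h/2) *\<^sub>R 1) \<longleftrightarrow> x \<in> supball (s n w) \<rho>" .
      qed
      have mm: "measure P (cbox (c - (h/2) *\<^sub>R 1) (c + (h/2) *\<^sub>R 1)) = measure Q' (supball (s n w) \<rho>)"
        using mP[of "cbox (c - (h/2) *\<^sub>R 1) (c + (h/2) *\<^sub>R 1)"] pre by simp
      have rt: "Lc * h + 2 ^ CARD('p) * (C' / sqrt (real n)) / h ^ CARD('p) \<le> (2 * Lc + C') * real n powr gamma_rate p \<alpha>"
        using rate[OF n1 Lc0 C'0, of \<alpha> p] unfolding h_def \<rho>_def pc by simp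
      show "\<bar>measure (Q n w \<theta>) (supball (s n w) (real n powr (-\<alpha>)))
                   / (2 * real n powr (-\<alpha>) * sqrt (real n)) ^ p
                 - gauss_pdf (Vn n w \<theta>) (sqrt (real n) *\<^sub>R (s n w - rn n w \<theta>))\<bar>
               \<le> (2 * Lc + C') * real n powr (gamma_rate p \<alpha>)"
        using co rt mm unfolding Q'_def V'_def r'_def c_def h_def \<rho>_def pc by simp
    qed
  qed
  have p1: "p \<ge> 1" using pc by simp
  show ?thesis using main gamma_part[OF p1] by blast
qed

end
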